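(* Let $d\ge 2$ be an integer with $d\ne 3$, let $w=(-1,1,\dots,1)^\intercal\in\mathbb R^{d+2}$, and let $\mathbf U=\mathbf U_n\cdots\mathbf U_2\mathbf U_1$ be a word with letters in $\{\mathbf R_1,\dots,\mathbf R_{d+2}\}$ (evaluated as a matrix product) such that $\mathbf U_1=\mathbf R_1$ and no two consecutive letters are equal. Then for every $1\le i\le d+2$ such that the letter $\mathbf R_i$ occurs in $\mathbf U$, we have $\sigma_i^w(\mathbf U)\ne 1$.
   Context: Let $\mathbf e\in\mathbb R^{d+2}$ be the all-ones vector, $\mathbf e_i$ the $i$-th standard basis vector and $\mathbf I$ the $(d+2)\times(d+2)$ identity. For $1\le i\le d+2$, $\mathbf R_i=\mathbf I+\frac{2}{d-1}\mathbf e_i\mathbf e^\intercal-\frac{2d}{d-1}\mathbf e_i\mathbf e_i^\intercal$ (equal to $\mathbf I$ except that row $i$ has diagonal entry $-1$ and off-diagonal entries $2/(d-1)$). For a matrix $\mathbf U$, $\sigma_i^w(\mathbf U)=\mathbf e_i^\intercal\mathbf U w$ is the $w$-weighted sum of the $i$-th row. *)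

theory Defs
  imports Complex_Main "Jordan_Normal_Form.Matrix"
begin

text \<open>Matrices of size (d+2) x (d+2); the paper's 1-based index i corresponds to
  the 0-based JNF index i - 1.\<close>

definition all_ones :: "nat \<Rightarrow> real vec" where
  "all_ones n = vec n (\<lambda>_. 1)"

definition outer :: "real vec \<Rightarrow> real vec \<Rightarrow> real mat" where
  "outer u v = mat (dim_vec u) (dim_vec v) (\<lambda>(r, c). u $ r * v $ c)"

definition R :: "nat \<Rightarrow> nat \<Rightarrow> real mat" where
  "R d i = 1\<^sub>m (d+2)
     + (2 / (real d - 1)) \<cdot>\<^sub>m outer (unit_vec (d+2) (i-1)) (all_ones (d+2))
     - (2 * real d / (real d - 1)) \<cdot>\<^sub>m outer (unit_vec (d+2) (i-1)) (unit_vec (d+2) (i-1))"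

text \<open>Word U = U_n ... U_2 U_1 given by the list [a_1, ..., a_n] of letter indices,
  U_k = R_{a_k}.\<close>
definition word_mat :: "nat \<Rightarrow> nat list \<Rightarrow> real mat" where
  "word_mat d ws = foldl (\<lambda>M i. R d i * M) (1\<^sub>m (d+2)) ws"

definition sigma :: "nat \<Rightarrow> real vec \<Rightarrow> real mat \<Rightarrow> real" where
  "sigma i w U = (U *\<^sub>v w) $ (i-1)"

definition w_vec :: "nat \<Rightarrow> real vec" where
  "w_vec d = vec (d+2) (\<lambda>k. if k = 0 then -1 else 1)"

end

theory Submission imports Defs "HOL-Computational_Algebra.Primes" begin

definition cc :: "nat \<Rightarrow> real" where "cc d = 2 / (real d - 1)"

definition step :: "nat \<Rightarrow> nat \<Rightarrow> (nat \<Rightarrow> real) \<Rightarrow> (nat \<Rightarrow> real)" where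
  "step d a f = f(a-1 := - f (a-1) + cc d * (\<Sum>k\<in>{..<d+2}-{a-1}. f k))"

lemma R_carrier: "R d i \<in> carrier_mat (d+2) (d+2)"
  unfolding R_def outer_def by auto

lemma R_index: "r < d+2 \<Longrightarrow> k < d+2 \<Longrightarrow> R d i $$ (r,k) =
   (if r = k then 1 else 0) + (if r = i-1 then 2 / (real d - 1) else 0)
   - (if r = i - 1 \<and> k = i - 1 then 2 * real d / (real d - 1) else 0)"
  unfolding R_def outer_def all_ones_def by (auto simp: unit_vec_def)

lemma sum_helper: "finite N \<Longrightarrow> x \<in> N \<Longrightarrow> (\<Sum>k\<in>N. (c::real) * f k + (if k = x then t * f k else 0)) = c * sum f N + t * f x"
  by (simp add: sum.distrib) (simp add: sum_distrib_left)

lemma alg_helper: "(e::real) > 0 \<Longrightarrow> x + 2/e * S - 2 * (e+1) / e * x = -x + 2 / e * (S - x)"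
  by (simp add: field_simps)

lemma mat_step:
  assumes "dim_vec v = d+2" "1 \<le> a" "a \<le> d+2" "d \<ge> 2"
  shows "R d a *\<^sub>v v = vec (d+2) (step d a (\<lambda>k. v $ k))"
proof (rule eq_vecI)
  show "dim_vec (R d a *\<^sub>v v) = dim_vec (vec (d + 2) (step d a (($) v)))"
    using R_carrier[of d a] by simp
next
  fix r assume r: "r < dim_vec (vec (d + 2) (step d a (($) v)))"
  hence r': "r < d+2" by simp
  have "(R d a *\<^sub>v v) $ r = (\<Sum>k<d+2. R d a $$ (r,k) * v $ k)"
    using R_carrier[of d a] r' assms(1)
    by (simp add: scalar_prod_def row_def atLeast0LessThan)
  also have "\<dots> = (\<Sum>k<d+2. ((if r = k then 1 else 0) + (if r = a-1 then 2 / (real d - 1) else 0)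
   - (if r = a - 1 \<and> k = a - 1 then 2 * real d / (real d - 1) else 0)) * v $ k)"
    using r' by (intro sum.cong) (auto simp: R_index)
  also have "\<dots> = step d a (\<lambda>k. v $ k) r"
  proof (cases "r = a - 1")
    case False
    have "(\<Sum>k<d+2. ((if r = k then 1 else 0) + (if r = a-1 then 2 / (real d - 1) else 0)
   - (if r = a - 1 \<and> k = a - 1 then 2 * real d / (real d - 1) else 0)) * v $ k)
     = (\<Sum>k<d+2. if k = r then v $ k else 0)" using False by (intro sum.cong) auto
    then show ?thesis using r' False by (simp add: step_def)
  next
    case True
    have am: "a - 1 \<in> {..<d+2}" using assms by auto
    have s: "(\<Sum>k\<in>{..<d+2}-{a-1}. v $ k) = (\<Sum>k<d+2. v $ k) - v $ (a-1)"
      using sum_diff1[of "{..<d+2}" "\<lambda>k. v $ k" "a-1"] am by simp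
    have dd: "real d - 1 > 0" using assms by simp
    have "(\<Sum>k<d+2. ((if r = k then 1 else 0) + (if r = a-1 then 2 / (real d - 1) else 0)
   - (if r = a - 1 \<and> k = a - 1 then 2 * real d / (real d - 1) else 0)) * v $ k)
      = v $ (a-1) + 2 / (real d - 1) * (\<Sum>k<d+2. v $ k) - 2 * real d / (real d - 1) * v $ (a-1)"
    proof -
      have "(\<Sum>k<d+2. ((if r = k then 1 else 0) + (if r = a-1 then 2 / (real d - 1) else 0)
   - (if r = a - 1 \<and> k = a - 1 then 2 * real d / (real d - 1) else 0)) * v $ k)
        = (\<Sum>k<d+2. 2 / (real d - 1) * v $ k + (if k = a - 1 then (1 - 2 * real d / (real d - 1)) * v $ k else 0))"
        using True by (intro sum.cong) (auto simp: algebra_simps)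
      also have "\<dots> = 2 / (real d - 1) * (\<Sum>k<d+2. v $ k) + (1 - 2 * real d / (real d - 1)) * v $ (a-1)"
        using am by (intro sum_helper) auto
      finally show ?thesis by (simp add: algebra_simps)
    qed
    also have "\<dots> = step d a (\<lambda>k. v $ k) r"
      using True dd alg_helper[of "real d - 1" "v $ (a-1)" "\<Sum>k<d+2. v $ k"] unfolding step_def cc_def s by simp
    finally show ?thesis .
  qed
  finally show "(R d a *\<^sub>v v) $ r = vec (d + 2) (step d a (($) v)) $ r" using r' by simp
qed

definition atl :: "int \<Rightarrow> real \<Rightarrow> nat \<Rightarrow> bool" where
  "atl p v b \<longleftrightarrow> (\<exists>y u. \<not> p dvd u \<and> v = of_int y / (of_int u * of_int p ^ b))"

definition exa :: "int \<Rightarrow> real \<Rightarrow> nat \<Rightarrow> bool" where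
  "exa p v b \<longleftrightarrow> (\<exists>x u. \<not> p dvd x \<and> \<not> p dvd u \<and> v = of_int x / (of_int u * of_int p ^ b))"

lemma ndvd_nz: "\<not> p dvd (u::int) \<Longrightarrow> u \<noteq> 0" by auto

lemma exa_atl: "exa p v b \<Longrightarrow> atl p v b"
  unfolding exa_def atl_def by blast

lemma atl_const: "prime p \<Longrightarrow> atl p (of_int y) b"
  unfolding atl_def
  by (rule exI[of _ "y * p ^ b"], rule exI[of _ 1]) (auto simp: power_not_zero prime_gt_0_int)

lemma atl_mono:
  assumes "atl p v b" "b \<le> b'" "p \<noteq> 0"
  shows "atl p v b'"
proof -
  obtain y u where yu: "\<not> p dvd u" "v = of_int y / (of_int u * of_int p ^ b)"
    using assms(1) unfolding atl_def by blast
  have pw: "(of_int p :: real) ^ b' = of_int p ^ b * of_int p ^ (b' - b)"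
    using assms(2) by (simp add: power_add[symmetric])
  have "v = of_int (y * p ^ (b' - b)) / (of_int u * of_int p ^ b')"
    using yu assms(3) unfolding pw by (simp add: field_simps ndvd_nz)
  thus ?thesis using yu(1) unfolding atl_def by blast
qed

lemma atl_add:
  assumes "atl p v b" "atl p w b" "prime p"
  shows "atl p (v + w) b"
proof -
  obtain y1 u1 where 1: "\<not> p dvd u1" "v = of_int y1 / (of_int u1 * of_int p ^ b)"
    using assms(1) unfolding atl_def by blast
  obtain y2 u2 where 2: "\<not> p dvd u2" "w = of_int y2 / (of_int u2 * of_int p ^ b)"
    using assms(2) unfolding atl_def by blast
  have p0: "p \<noteq> 0" using assms(3) by auto
  have "v + w = of_int (y1 * u2 + y2 * u1) / (of_int (u1 * u2) * of_int p ^ b)"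
    using 1 2 p0 by (simp add: field_simps ndvd_nz)
  moreover have "\<not> p dvd u1 * u2" using 1 2 assms(3) prime_dvd_mult_iff by blast
  ultimately show ?thesis unfolding atl_def by blast
qed

lemma atl_neg: "atl p v b \<Longrightarrow> atl p (- v) b"
  unfolding atl_def by (metis minus_divide_left of_int_minus)

lemma atl_sum:
  assumes "finite A" "\<forall>k\<in>A. atl p (f k) b" "prime p"
  shows "atl p (\<Sum>k\<in>A. f k) b"
  using assms
proof (induction A rule: finite_induct)
  case empty
  then show ?case using atl_const[of p 0 b] by auto
next
  case (insert x F)
  then show ?case by (simp add: atl_add)
qed

lemma exa_add:
  assumes "exa p v b" "atl p w (b - 1)" "prime p" "b \<ge> 1"
  shows "exa p (v + w) b"
proof -
  obtain x1 u1 where 1: "\<not> p dvd x1" "\<not> p dvd u1" "v = of_int x1 / (of_int u1 * of_int p ^ b)"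
    using assms(1) unfolding exa_def by blast
  obtain y2 u2 where 2: "\<not> p dvd u2" "w = of_int y2 / (of_int u2 * of_int p ^ (b-1))"
    using assms(2) unfolding atl_def by blast
  have p0: "p \<noteq> 0" using assms(3) by auto
  have pb: "(of_int p :: real) ^ b = of_int p * of_int p ^ (b-1)"
    using assms(4) by (metis Suc_diff_le diff_Suc_1 power_Suc)
  have "v + w = of_int (x1 * u2 + y2 * u1 * p) / (of_int (u1 * u2) * of_int p ^ b)"
    using 1 2 p0 unfolding pb by (simp add: field_simps ndvd_nz)
  moreover have "\<not> p dvd u1 * u2" using 1 2 assms(3) prime_dvd_mult_iff by blast
  moreover have "\<not> p dvd x1 * u2 + y2 * u1 * p"
  proof
    assume "p dvd x1 * u2 + y2 * u1 * p"
    hence "p dvd x1 * u2" by (simp add: dvd_add_left_iff)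
    thus False using 1 2 assms(3) prime_dvd_mult_iff by blast
  qed
  ultimately show ?thesis unfolding exa_def by blast
qed

lemma exa_mult:
  assumes "exa p v b" "exa p c e" "prime p"
  shows "exa p (c * v) (b + e)"
proof -
  obtain x1 u1 where 1: "\<not> p dvd x1" "\<not> p dvd u1" "v = of_int x1 / (of_int u1 * of_int p ^ b)"
    using assms(1) unfolding exa_def by blast
  obtain x2 u2 where 2: "\<not> p dvd x2" "\<not> p dvd u2" "c = of_int x2 / (of_int u2 * of_int p ^ e)"
    using assms(2) unfolding exa_def by blast
  have "c * v = of_int (x2 * x1) / (of_int (u2 * u1) * of_int p ^ (b + e))"
    using 1 2 by (simp add: power_add field_simps)
  moreover have "\<not> p dvd u2 * u1" using 1 2 assms(3) prime_dvd_mult_iff by blast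
  moreover have "\<not> p dvd x2 * x1" using 1 2 assms(3) prime_dvd_mult_iff by blast
  ultimately show ?thesis unfolding exa_def by blast
qed

lemma exa_ne1:
  assumes "exa p v b" "b \<ge> 1" "prime p"
  shows "v \<noteq> 1"
proof
  assume v1: "v = 1"
  obtain x u where 1: "\<not> p dvd x" "\<not> p dvd u" "v = of_int x / (of_int u * of_int p ^ b)"
    using assms(1) unfolding exa_def by blast
  have p0: "p \<noteq> 0" using assms(3) by auto
  have "(of_int x :: real) = of_int (u * p ^ b)" using 1 v1 p0 by (simp add: field_simps ndvd_nz)
  hence "x = u * p ^ b" by (simp only: of_int_eq_iff)
  hence "p dvd x" using assms(2) by (simp add: dvd_power)
  thus False using 1 by simp
qed


definition w0 :: "nat \<Rightarrow> real" where "w0 = (\<lambda>k. if k = 0 then -1 else 1)"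

definition F :: "nat \<Rightarrow> nat list \<Rightarrow> nat \<Rightarrow> real" where
  "F d ws = foldl (\<lambda>f a. step d a f) w0 ws"

lemma F_snoc: "F d (xs @ [a]) = step d a (F d xs)"
  unfolding F_def by simp

lemma step_other: "k \<noteq> a - 1 \<Longrightarrow> step d a f k = f k"
  unfolding step_def by simp

lemma step_same: "step d a f (a-1) = - f (a-1) + cc d * (\<Sum>k\<in>{..<d+2}-{a-1}. f k)"
  unfolding step_def by simp

lemma step_vec: "k < d + 2 \<Longrightarrow> step d a (\<lambda>k. vec (d+2) f $ k) k = step d a f k"
  unfolding step_def by (auto intro!: sum.cong)

lemma word_mat_snoc: "word_mat d (xs @ [a]) = R d a * word_mat d xs"
  unfolding word_mat_def by simp

lemma word_vec:
  assumes "\<forall>a\<in>set ws. 1 \<le> a \<and> a \<le> d + 2" "d \<ge> 2"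
  shows "word_mat d ws \<in> carrier_mat (d+2) (d+2) \<and> word_mat d ws *\<^sub>v w_vec d = vec (d+2) (F d ws)"
  using assms(1)
proof (induction ws rule: rev_induct)
  case Nil
  have "w_vec d = vec (d+2) w0" unfolding w_vec_def w0_def by auto
  then show ?case by (simp add: word_mat_def F_def w_vec_def)
next
  case (snoc a xs)
  have IH: "word_mat d xs \<in> carrier_mat (d+2) (d+2)" "word_mat d xs *\<^sub>v w_vec d = vec (d+2) (F d xs)"
    using snoc by auto
  have a: "1 \<le> a" "a \<le> d+2" using snoc.prems by auto
  have wv: "w_vec d \<in> carrier_vec (d+2)" unfolding w_vec_def by simp
  have "word_mat d (xs @ [a]) *\<^sub>v w_vec d = R d a *\<^sub>v (word_mat d xs *\<^sub>v w_vec d)"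
    unfolding word_mat_snoc using assoc_mult_mat_vec[OF R_carrier IH(1) wv] .
  also have "\<dots> = vec (d+2) (step d a (\<lambda>k. vec (d+2) (F d xs) $ k))"
    unfolding IH(2) by (rule mat_step) (use a assms(2) in auto)
  also have "\<dots> = vec (d+2) (F d (xs @ [a]))"
    unfolding F_snoc using step_vec[of _ d a "F d xs"] by (intro eq_vecI) auto
  finally show ?case using IH(1) R_carrier[of d a] unfolding word_mat_snoc by auto
qed

lemma sigma_F:
  assumes "\<forall>a\<in>set ws. 1 \<le> a \<and> a \<le> d + 2" "d \<ge> 2" "1 \<le> i" "i \<le> d + 2"
  shows "sigma i (w_vec d) (word_mat d ws) = F d ws (i - 1)"
  using word_vec[OF assms(1,2)] assms(3,4) unfolding sigma_def by auto

lemma word_induct: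
  assumes "P ws0" "ws0 \<noteq> []" "\<forall>a\<in>set (ws0 @ rest). 1 \<le> a \<and> a \<le> d + 2"
    "successively (\<noteq>) (ws0 @ rest)"
    "\<And>xs a. xs \<noteq> [] \<Longrightarrow> \<forall>x\<in>set xs. 1 \<le> x \<and> x \<le> d + 2 \<Longrightarrow> P xs \<Longrightarrow> 1 \<le> a \<Longrightarrow> a \<le> d + 2
       \<Longrightarrow> a \<noteq> last xs \<Longrightarrow> P (xs @ [a])"
  shows "P (ws0 @ rest)"
  using assms(3,4)
proof (induction rest rule: rev_induct)
  case Nil
  then show ?case using assms(1) by simp
next
  case (snoc a xs)
  have 1: "successively (\<noteq>) (ws0 @ xs)" "last (ws0 @ xs) \<noteq> a"
    using snoc.prems(2) assms(2) unfolding append_assoc[symmetric] successively_append_iff by auto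
  have "P (ws0 @ xs)" using snoc 1 by auto
  moreover have "\<forall>x\<in>set (ws0 @ xs). 1 \<le> x \<and> x \<le> d + 2" using snoc.prems(1) by auto
  ultimately have "P ((ws0 @ xs) @ [a])"
    using assms(5)[of "ws0 @ xs" a] assms(2) 1 snoc.prems(1) by auto
  then show ?case by simp
qed

lemma padic_pres:
  assumes p: "prime p" and c: "exa p (cc d) e" "e \<ge> 1" and b: "b \<ge> 1" and j: "j < d + 2"
    and fj: "exa p (f j) b" and fk: "\<forall>k<d+2. k \<noteq> j \<longrightarrow> atl p (f k) (b - 1)"
    and a: "1 \<le> a" "a \<le> d + 2" "a - 1 \<noteq> j"
  shows "exa p (step d a f (a-1)) (b+e) \<and> (\<forall>k<d+2. k \<noteq> a-1 \<longrightarrow> atl p (step d a f k) (b+e-1))"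
proof
  let ?i = "a - 1"
  have jin: "j \<in> {..<d+2}-{?i}" using j a by auto
  have S: "(\<Sum>k\<in>{..<d+2}-{?i}. f k) = f j + (\<Sum>k\<in>{..<d+2}-{?i}-{j}. f k)"
    using sum.remove[OF _ jin, of f] by simp
  have "atl p (\<Sum>k\<in>{..<d+2}-{?i}-{j}. f k) (b-1)"
    by (rule atl_sum) (use fk p in auto)
  hence "exa p (\<Sum>k\<in>{..<d+2}-{?i}. f k) b" unfolding S using exa_add fj p b by blast
  hence 1: "exa p (cc d * (\<Sum>k\<in>{..<d+2}-{?i}. f k)) (b+e)" using exa_mult c p by blast
  have "atl p (- f ?i) (b - 1)" using fk a atl_neg by auto
  hence X: "atl p (- f ?i) (b + e - 1)" using atl_mono p by (metis diff_le_mono le_add1 not_prime_0)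
  have "exa p (cc d * (\<Sum>k\<in>{..<d+2}-{?i}. f k) + - f ?i) (b+e)"
    by (rule exa_add[OF 1 X p]) (use b in simp)
  thus "exa p (step d a f (a-1)) (b+e)" unfolding step_same by (simp add: add.commute)
next
  show "\<forall>k<d+2. k \<noteq> a-1 \<longrightarrow> atl p (step d a f k) (b+e-1)"
  proof (intro allI impI)
    fix k assume k: "k < d+2" "k \<noteq> a - 1"
    have p0: "p \<noteq> 0" using p by auto
    show "atl p (step d a f k) (b+e-1)"
    proof (cases "k = j")
      case True
      then show ?thesis using k fj exa_atl atl_mono[OF _ _ p0, of "f j" b "b+e-1"] c(2)
        by (simp add: step_other)
    next
      case False
      then show ?thesis using k fk atl_mono[OF _ _ p0, of "f k" "b-1" "b+e-1"]
        by (simp add: step_other)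
    qed
  qed
qed

lemma two_pres:
  assumes j: "j < 4" and ge: "\<forall>k<4. f k \<ge> 1" and mx: "\<forall>k<4. k \<noteq> j \<longrightarrow> f k < f j"
    and a: "1 \<le> a" "a \<le> 4" "a - 1 \<noteq> j"
  shows "step 2 a f (a-1) > f j \<and> (\<forall>k<4. k \<noteq> a-1 \<longrightarrow> step 2 a f k \<le> f j) \<and> (\<forall>k<4. step 2 a f k \<ge> 1)"
proof -
  let ?i = "a - 1"
  have jin: "j \<in> {..<2+2}-{?i}" using j a by auto
  have S: "(\<Sum>k\<in>{..<2+2}-{?i}. f k) = f j + (\<Sum>k\<in>{..<2+2}-{?i}-{j}. f k)"
    using sum.remove[OF _ jin, of f] by simp
  have r: "(\<Sum>k\<in>{..<2+2}-{?i}-{j}. f k) \<ge> 0"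
    by (rule sum_nonneg) (use ge in force)
  have "f ?i < f j" using mx a by auto
  hence new: "step 2 a f (a-1) > f j"
    unfolding step_same S cc_def using r ge j by auto
  have oth: "\<forall>k<4. k \<noteq> a-1 \<longrightarrow> step 2 a f k \<le> f j"
    using mx by (auto simp: step_other less_imp_le)
  have "\<forall>k<4. step 2 a f k \<ge> 1"
  proof (intro allI impI)
    fix k :: nat assume "k < 4"
    show "step 2 a f k \<ge> 1"
    proof (cases "k = a - 1")
      case True then show ?thesis using new ge j by force
    next
      case False then show ?thesis using ge \<open>k<4\<close> by (simp add: step_other)
    qed
  qed
  thus ?thesis using new oth by blast
qed


definition InvP :: "int \<Rightarrow> nat \<Rightarrow> nat list \<Rightarrow> bool" where
  "InvP p d ws \<longleftrightarrow> (\<exists>b\<ge>1. exa p (F d ws (last ws - 1)) b \<and>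
      (\<forall>k<d+2. k \<noteq> last ws - 1 \<longrightarrow> atl p (F d ws k) (b - 1))) \<and> (\<forall>x\<in>set ws. F d ws (x - 1) \<noteq> 1)"

definition Inv2 :: "nat list \<Rightarrow> bool" where
  "Inv2 ws \<longleftrightarrow> (\<forall>k<4. F 2 ws k \<ge> 1) \<and> (\<forall>k<4. k \<noteq> last ws - 1 \<longrightarrow> F 2 ws k < F 2 ws (last ws - 1))
     \<and> (\<forall>x\<in>set ws. F 2 ws (x - 1) > 1)"

lemma InvP_pres:
  assumes p: "prime p" and c: "exa p (cc d) e" "e \<ge> 1"
    and xs: "xs \<noteq> []" "\<forall>x\<in>set xs. 1 \<le> x \<and> x \<le> d + 2" "InvP p d xs"
    and a: "1 \<le> a" "a \<le> d + 2" "a \<noteq> last xs"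
  shows "InvP p d (xs @ [a])"
proof -
  obtain b where b: "b \<ge> 1" "exa p (F d xs (last xs - 1)) b"
     "\<forall>k<d+2. k \<noteq> last xs - 1 \<longrightarrow> atl p (F d xs k) (b - 1)"
    and t: "\<forall>x\<in>set xs. F d xs (x - 1) \<noteq> 1"
    using xs(3) unfolding InvP_def by blast
  have lin: "last xs \<in> set xs" using xs(1) by simp
  hence lr: "1 \<le> last xs" "last xs \<le> d + 2" using xs(2) by auto
  have aj: "a - 1 \<noteq> last xs - 1" using a lr by auto
  have P: "exa p (step d a (F d xs) (a-1)) (b+e) \<and> (\<forall>k<d+2. k \<noteq> a-1 \<longrightarrow> atl p (step d a (F d xs) k) (b+e-1))"
    by (rule padic_pres[OF p c b(1) _ b(2) b(3) a(1,2) aj]) (use lr in auto)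
  have T: "\<forall>x\<in>set (xs @ [a]). F d (xs @ [a]) (x - 1) \<noteq> 1"
  proof
    fix x assume x: "x \<in> set (xs @ [a])"
    show "F d (xs @ [a]) (x - 1) \<noteq> 1"
    proof (cases "x = a")
      case True
      then show ?thesis using P exa_ne1[OF _ _ p, of _ "b+e"] b(1) unfolding F_snoc by auto
    next
      case False
      hence "x \<in> set xs" using x by auto
      moreover hence "x - 1 \<noteq> a - 1" using False xs(2) a(1) by fastforce
      ultimately show ?thesis using t unfolding F_snoc by (simp add: step_other)
    qed
  qed
  show ?thesis unfolding InvP_def using P T b(1) unfolding F_snoc
    by (intro conjI exI[of _ "b+e"]) auto
qed

lemma Inv2_pres:
  assumes xs: "xs \<noteq> []" "\<forall>x\<in>set xs. 1 \<le> x \<and> x \<le> 4" "Inv2 xs"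
    and a: "1 \<le> a" "a \<le> 4" "a \<noteq> last xs"
  shows "Inv2 (xs @ [a])"
proof -
  have I: "\<forall>k<4. F 2 xs k \<ge> 1" "\<forall>k<4. k \<noteq> last xs - 1 \<longrightarrow> F 2 xs k < F 2 xs (last xs - 1)"
     "\<forall>x\<in>set xs. F 2 xs (x - 1) > 1" using xs(3) unfolding Inv2_def by auto
  have lin: "last xs \<in> set xs" using xs(1) by simp
  hence lr: "1 \<le> last xs" "last xs \<le> 4" using xs(2) by auto
  have aj: "a - 1 \<noteq> last xs - 1" using a lr by auto
  have P: "step 2 a (F 2 xs) (a-1) > F 2 xs (last xs - 1) \<and> (\<forall>k<4. k \<noteq> a-1 \<longrightarrow> step 2 a (F 2 xs) k \<le> F 2 xs (last xs - 1))
      \<and> (\<forall>k<4. step 2 a (F 2 xs) k \<ge> 1)"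
    by (rule two_pres[OF _ I(1) I(2) a(1,2) aj]) (use lr in auto)
  have g1: "F 2 xs (last xs - 1) > 1" using I(3) lin by auto
  have T: "\<forall>x\<in>set (xs @ [a]). F 2 (xs @ [a]) (x - 1) > 1"
  proof
    fix x assume x: "x \<in> set (xs @ [a])"
    show "F 2 (xs @ [a]) (x - 1) > 1"
    proof (cases "x = a")
      case True
      then show ?thesis using P g1 unfolding F_snoc by auto
    next
      case False
      hence "x \<in> set xs" using x by auto
      moreover hence "x - 1 \<noteq> a - 1" using False xs(2) a(1) by fastforce
      ultimately show ?thesis using I(3) unfolding F_snoc by (simp add: step_other)
    qed
  qed
  show ?thesis unfolding Inv2_def using P T unfolding F_snoc
    by (auto dest: order.strict_trans1)
qed

lemma F1:
  shows "F d [1] 0 = 1 + cc d * (real d + 1)" "k \<noteq> 0 \<Longrightarrow> F d [1] k = 1"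
proof -
  have "(\<Sum>k\<in>{..<d+2}-{0}. w0 k) = (\<Sum>k\<in>{..<d+2}-{0}. 1)"
    by (rule sum.cong) (auto simp: w0_def)
  also have "\<dots> = real d + 1" by simp
  finally show "F d [1] 0 = 1 + cc d * (real d + 1)"
    unfolding F_def using step_same[of d 1 w0] by (simp add: w0_def)
  show "k \<noteq> 0 \<Longrightarrow> F d [1] k = 1" unfolding F_def by (simp add: step_other w0_def)
qed

lemma F1'[simp]: "k \<noteq> 0 \<Longrightarrow> F d [Suc 0] k = 1"
  using F1(2) by simp

lemma alg2: "(X::real) > 0 \<Longrightarrow> 1 + 2 / X * (X + 2) = (3 * X + 4) / X"
  by (simp add: field_simps)

lemma alg3: "(X::real) > 0 \<Longrightarrow> 1 + 2 / (4 * X) * (4 * X + 2) = (3 * X + 1) / X"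
  by (simp add: field_simps)

lemma decomp: "n > 0 \<Longrightarrow> (p::nat) > 1 \<Longrightarrow> \<exists>k u. n = p ^ k * u \<and> \<not> p dvd u"
proof (induction n rule: less_induct)
  case (less n)
  show ?case
  proof (cases "p dvd n")
    case True
    then obtain q where q: "n = p * q" by blast
    hence "q < n" "q > 0" using less.prems by auto
    then obtain k u where "q = p ^ k * u" "\<not> p dvd u" using less by blast
    then show ?thesis using q by (intro exI[of _ "Suc k"] exI[of _ u]) auto
  next
    case False
    then show ?thesis by (intro exI[of _ 0] exI[of _ n]) auto
  qed
qed


lemma InvP_base1:
  assumes p: "prime p" and v: "exa p (F d [1] 0) b" "b \<ge> 1"
  shows "InvP p d [1]"
proof -
  have "\<forall>k<d+2. k \<noteq> 0 \<longrightarrow> atl p (F d [1] k) (b - 1)"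
    using atl_const[OF p, of 1] by (auto simp: F1)
  moreover have "F d [1] 0 \<noteq> 1" using exa_ne1[OF v p] .
  ultimately show ?thesis unfolding InvP_def using v by auto
qed

lemma base_odd:
  assumes p: "prime p" "p \<noteq> 2" and m: "d - 1 = p ^ e * u0" "\<not> p dvd u0" "e \<ge> 1" and d: "d \<ge> 2"
  shows "exa (int p) (cc d) e \<and> InvP (int p) d [1]"
proof -
  have pi: "prime (int p)" using p by simp
  have M: "real d - 1 = real u0 * real p ^ e"
  proof -
    have "real (d - 1) = real (p ^ e * u0)" using m by simp
    thus ?thesis using d by (simp add: of_nat_diff)
  qed
  have u0: "\<not> int p dvd int u0" using m(2) by simp
  have p2: "\<not> int p dvd 2"
  proof
    assume "int p dvd 2"
    hence "p dvd 2" by presburger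
    hence "p \<le> 2" by (simp add: dvd_imp_le)
    thus False using p prime_ge_2_nat[OF p(1)] by auto
  qed
  have pos: "real u0 * real p ^ e > 0" using M d by simp
  have "cc d = of_int 2 / (of_int (int u0) * of_int (int p) ^ e)" unfolding cc_def M by simp
  hence c: "exa (int p) (cc d) e" unfolding exa_def using u0 p2 by blast
  have dv: "int p dvd int (d - 1)" using m(1,3) by (simp add: dvd_power)
  have n4: "\<not> int p dvd 3 * int (d - 1) + 4"
  proof
    assume "int p dvd 3 * int (d - 1) + 4"
    hence "int p dvd 4" using dv by (simp add: dvd_add_right_iff)
    hence "int p dvd 2 * 2" by simp
    hence "int p dvd 2" using pi prime_dvd_mult_iff by blast
    thus False using p2 by simp
  qed
  have "F d [1] 0 = 1 + 2 / (real d - 1) * (real d + 1)" using F1(1) unfolding cc_def .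
  also have "\<dots> = (3 * (real d - 1) + 4) / (real d - 1)"
    using alg2[of "real d - 1"] pos M by (simp add: algebra_simps)
  also have "\<dots> = of_int (3 * int (d - 1) + 4) / (of_int (int u0) * of_int (int p) ^ e)"
    using d M by (simp add: of_nat_diff)
  finally have "exa (int p) (F d [1] 0) e" unfolding exa_def using n4 u0 by blast
  thus ?thesis using c InvP_base1[OF pi _ m(3)] by blast
qed

lemma base_two:
  assumes m: "d - 1 = 4 * 2 ^ j" "j \<ge> 1"
  shows "exa 2 (cc d) (j + 1) \<and> InvP 2 d [1]"
proof -
  have M: "real d - 1 = 4 * 2 ^ j"
  proof -
    have "real (d - 1) = real (4 * 2 ^ j)" using m by simp
    moreover have "d \<ge> 1" using m by (cases d) auto
    ultimately show ?thesis by (simp add: of_nat_diff)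
  qed
  have "cc d = of_int 1 / (of_int 1 * of_int 2 ^ (j+1))" unfolding cc_def M by simp
  hence c: "exa 2 (cc d) (j+1)" unfolding exa_def
    by (intro exI[of _ 1]) simp
  have ev: "even ((2::int) ^ j)" using m(2) by simp
  have n: "\<not> (2::int) dvd 3 * 2 ^ j + 1" using ev by simp
  have r: "real d + 1 = (real d - 1) + 2" by simp
  have "F d [1] 0 = 1 + 2 / (4 * 2 ^ j) * (4 * 2 ^ j + 2)"
    using F1(1)[of d, unfolded cc_def r] unfolding M .
  also have "\<dots> = (3 * 2 ^ j + 1) / 2 ^ j" by (rule alg3) simp
  also have "\<dots> = of_int (3 * 2 ^ j + 1) / (of_int 1 * of_int 2 ^ j)" by simp
  finally have "exa 2 (F d [1] 0) j" unfolding exa_def using n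
    by (intro exI[of _ "3 * 2 ^ j + 1"] exI[of _ 1]) simp
  thus ?thesis using c InvP_base1[of 2 d j] m(2) by simp
qed

lemma base_five:
  assumes a: "2 \<le> a" "a \<le> 7"
  shows "exa 2 (cc 5) 1 \<and> InvP 2 5 [1, a]"
proof -
  have cc5: "cc 5 = 1 / 2" unfolding cc_def by simp
  have c: "exa 2 (cc 5) 1" unfolding exa_def cc5 by (rule exI[of _ 1], rule exI[of _ 1]) simp
  have f10: "F 5 [1] 0 = 4" using F1(1)[of 5] cc5 by simp
  have F2: "F 5 [1, a] = step 5 a (F 5 [1])" using F_snoc[of 5 "[1]" a] by simp
  have i0: "0 \<in> {..<5+2} - {a - 1}" using a by auto
  have "(\<Sum>k\<in>{..<5+2}-{a-1}. F 5 [1] k) = F 5 [1] 0 + (\<Sum>k\<in>{..<5+2}-{a-1}-{0}. F 5 [1] k)"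
    using sum.remove[OF _ i0, of "F 5 [1]"] by simp
  also have "(\<Sum>k\<in>{..<5+2}-{a-1}-{0}. F 5 [1] k) = (\<Sum>k\<in>{..<5+2}-{a-1}-{0}. 1)"
    by (rule sum.cong) (auto simp: F1(2))
  also have "\<dots> = 5"
  proof -
    have "card ({..<5+2}-{a-1}-{0}) = 5" using a by (simp add: card_Diff_singleton_if)
    thus ?thesis by simp
  qed
  finally have S: "(\<Sum>k\<in>{..<5+2}-{a-1}. F 5 [1] k) = 9" using f10 by simp
  have fa: "F 5 [1, a] (a - 1) = 7 / 2"
    unfolding F2 step_same S cc5 using F1(2)[of "a-1" 5] a by simp
  have ex: "exa 2 (F 5 [1, a] (a - 1)) 1" unfolding exa_def fa
    by (rule exI[of _ 7], rule exI[of _ 1]) simp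
  have oth: "\<forall>k<5+2. k \<noteq> a - 1 \<longrightarrow> atl 2 (F 5 [1, a] k) 0"
  proof (intro allI impI)
    fix k :: nat assume "k < 5 + 2" "k \<noteq> a - 1"
    hence "F 5 [1, a] k = F 5 [1] k" unfolding F2 by (simp add: step_other)
    moreover have "F 5 [1] k = of_int (if k = 0 then 4 else 1)" using f10 F1(2)[of k 5] by auto
    ultimately show "atl 2 (F 5 [1, a] k) 0" using atl_const[of 2] by simp
  qed
  have t: "\<forall>x\<in>set [1, a]. F 5 [1, a] (x - 1) \<noteq> 1"
  proof -
    have "F 5 [1, a] 0 = 4" using a f10 unfolding F2 by (simp add: step_other)
    thus ?thesis using fa by auto
  qed
  show ?thesis using c ex oth t unfolding InvP_def by auto
qed


lemma InvP_run:
  assumes p: "prime p" and c: "exa p (cc d) e" "e \<ge> 1" and b: "InvP p d ws0" "ws0 \<noteq> []"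
    and ws: "\<forall>a\<in>set (ws0 @ rest). 1 \<le> a \<and> a \<le> d + 2" "successively (\<noteq>) (ws0 @ rest)"
  shows "\<forall>x\<in>set (ws0 @ rest). F d (ws0 @ rest) (x - 1) \<noteq> 1"
proof -
  have "InvP p d (ws0 @ rest)"
    by (rule word_induct[where d = d and P = "InvP p d", OF b ws]) (rule InvP_pres[OF p c], auto)
  thus ?thesis unfolding InvP_def by blast
qed

lemma main_core:
  assumes d: "d \<ge> 2" "d \<noteq> 3" and ws: "ws \<noteq> []" "\<forall>a\<in>set ws. 1 \<le> a \<and> a \<le> d + 2"
    "ws ! 0 = 1" "successively (\<noteq>) ws"
  shows "\<forall>x\<in>set ws. F d ws (x - 1) \<noteq> 1"
proof -
  obtain rest where wr: "ws = [1] @ rest" using ws(1,3) by (cases ws) auto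
  have mpos: "d - 1 > 0" using d by simp
  obtain k u where ku: "d - 1 = 2 ^ k * u" "\<not> 2 dvd u" using decomp[OF mpos, of 2] by auto
  show ?thesis
  proof (cases "u = 1")
    case False
    then obtain q where q: "prime q" "q dvd u" using prime_factor_nat by blast
    have q2: "q \<noteq> 2" using q ku(2) by auto
    have qm: "q dvd d - 1" using q ku(1) by simp
    obtain e u0 where eu: "d - 1 = q ^ e * u0" "\<not> q dvd u0"
      using decomp[OF mpos, of q] prime_gt_1_nat[OF q(1)] by auto
    have e1: "e \<ge> 1"
    proof (rule ccontr)
      assume "\<not> e \<ge> 1"
      hence "e = 0" by simp
      thus False using eu qm by simp
    qed
    have B: "exa (int q) (cc d) e \<and> InvP (int q) d [1]" by (rule base_odd[OF q(1) q2 eu e1 d(1)])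
    show ?thesis unfolding wr
    proof (rule InvP_run[of "int q" d e])
      show "prime (int q)" using q by simp
      show "exa (int q) (cc d) e" "InvP (int q) d [1]" using B by auto
      show "1 \<le> e" by (rule e1)
      show "[1] \<noteq> []" by simp
      show "\<forall>a\<in>set ([1] @ rest). 1 \<le> a \<and> a \<le> d + 2" using ws(2) unfolding wr .
      show "successively (\<noteq>) ([1] @ rest)" using ws(4) unfolding wr .
    qed
  next
    case True
    hence m: "d - 1 = 2 ^ k" using ku by simp
    consider "k = 0" | "k = 1" | "k = 2" | "k \<ge> 3" by linarith
    then show ?thesis
    proof cases
      case 1
      hence d2: "d = 2" using m d by simp
      have cc2: "cc 2 = 2" unfolding cc_def by simp
      have f0: "F 2 [1] 0 = 7" using F1(1)[of 2] cc2 by simp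
      have fk: "\<And>k. F 2 [1] k = (if k = 0 then 7 else 1)" using f0 F1(2) by auto
      have I: "Inv2 [1]" unfolding Inv2_def by (simp only: fk) auto
      have "Inv2 ([1] @ rest)"
      proof (rule word_induct[where d = 2 and P = Inv2, OF I])
        show "[1] \<noteq> []" by simp
        show "\<forall>a\<in>set ([1] @ rest). 1 \<le> a \<and> a \<le> 2 + 2" using ws(2) unfolding wr d2 .
        show "successively (\<noteq>) ([1] @ rest)" using ws(4) unfolding wr .
      next
        fix xs :: "nat list" and a :: nat
        assume "xs \<noteq> []" "\<forall>x\<in>set xs. 1 \<le> x \<and> x \<le> 2 + 2" "Inv2 xs" "1 \<le> a" "a \<le> 2 + 2" "a \<noteq> last xs"
        thus "Inv2 (xs @ [a])" by (intro Inv2_pres) simp_all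
      qed
      hence "\<forall>x\<in>set ws. F 2 ws (x - 1) > 1" unfolding Inv2_def wr by blast
      thus ?thesis unfolding d2 by force
    next
      case 2
      thus ?thesis using m d by simp
    next
      case 3
      hence d5: "d = 5" using m d by simp
      show ?thesis
      proof (cases rest)
        case Nil
        have "F 5 [1] 0 = 4" using F1(1)[of 5] unfolding cc_def by simp
        thus ?thesis unfolding wr d5 Nil by simp
      next
        case (Cons a rest')
        have a: "2 \<le> a" "a \<le> 7"
        proof -
          have "a \<noteq> 1" using ws(4) unfolding wr Cons by simp
          moreover have "1 \<le> a \<and> a \<le> 7" using ws(2) unfolding wr Cons d5 by simp
          ultimately show "2 \<le> a" "a \<le> 7" by auto
        qed
        have B: "exa 2 (cc 5) 1 \<and> InvP 2 5 [1, a]" by (rule base_five[OF a])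
        have "\<forall>x\<in>set ([1, a] @ rest'). F 5 ([1, a] @ rest') (x - 1) \<noteq> 1"
        proof (rule InvP_run[of 2 5 1])
          show "prime (2::int)" by simp
          show "exa 2 (cc 5) 1" "InvP 2 5 [1, a]" using B by auto
          show "(1::nat) \<le> 1" by simp
          show "[1, a] \<noteq> []" by simp
          show "\<forall>b\<in>set ([1, a] @ rest'). 1 \<le> b \<and> b \<le> 5 + 2" using ws(2) unfolding wr Cons d5 by simp
          show "successively (\<noteq>) ([1, a] @ rest')" using ws(4) unfolding wr Cons by simp
        qed
        thus ?thesis unfolding wr Cons d5 by simp
      qed
    next
      case 4
      define j where "j = k - 2"
      have j: "k = j + 2" "j \<ge> 1" using 4 unfolding j_def by simp_all
      have m4: "d - 1 = 4 * 2 ^ j" using m j by (simp add: power_add)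
      have B: "exa 2 (cc d) (j + 1) \<and> InvP 2 d [1]" by (rule base_two[OF m4 j(2)])
      show ?thesis unfolding wr
      proof (rule InvP_run[of 2 d "j+1"])
        show "prime (2::int)" by simp
        show "exa 2 (cc d) (j+1)" "InvP 2 d [1]" using B by auto
        show "1 \<le> j + 1" by simp
        show "[1] \<noteq> []" by simp
        show "\<forall>a\<in>set ([1] @ rest). 1 \<le> a \<and> a \<le> d + 2" using ws(2) unfolding wr .
        show "successively (\<noteq>) ([1] @ rest)" using ws(4) unfolding wr .
      qed
    qed
  qed
qed

theorem lemma4p9:
  fixes d :: nat and ws :: "nat list"
  assumes "d \<ge> 2" and "d \<noteq> 3"
    and "ws \<noteq> []"
    and "\<forall>a\<in>set ws. 1 \<le> a \<and> a \<le> d + 2"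
    and "ws ! 0 = 1"
    and "\<forall>j. Suc j < length ws \<longrightarrow> ws ! j \<noteq> ws ! Suc j"
  shows "\<forall>i. 1 \<le> i \<and> i \<le> d + 2 \<and> i \<in> set ws \<longrightarrow> sigma i (w_vec d) (word_mat d ws) \<noteq> 1"
proof (intro allI impI)
  fix i assume i: "1 \<le> i \<and> i \<le> d + 2 \<and> i \<in> set ws"
  have s: "successively (\<noteq>) ws" using assms(6) unfolding successively_conv_nth by blast
  have "\<forall>x\<in>set ws. F d ws (x - 1) \<noteq> 1" by (rule main_core) (use assms s in auto)
  thus "sigma i (w_vec d) (word_mat d ws) \<noteq> 1" using sigma_F[OF assms(4,1)] i by auto
qed

end
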